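(* Let $\mathcal H=\{h_i:i\in\mathbb N\}$ be the class of singletons over $\mathbb N$, where $h_i(x)=1$ if $x=i$ and $h_i(x)=-1$ otherwise. There are two maps $F_a,F_b:\{0,1\}^n\to([n]\times\{\pm1\})^n$ such that for all $x,y\in\{0,1\}^n$, with $S=(F_a(x),F_b(y))$ (the concatenation, a sample of size $2n$) and identifying $x,y$ with subsets of $[n]$: (1) if $x\cap y=\emptyset$ then $L_S(f)\ge\frac{|x|+|y|}{2n}$ for every $f:[n]\to\{\pm1\}$; (2) if $x\cap y\ne\emptyset$ then $L_S(h)\le\frac{|x|+|y|-2}{2n}$ for some $h\in\mathcal H$.
   Context: For a sample $S$ (finite sequence of pairs $(x,y)$ with $y\in\{\pm1\}$) and hypothesis $h$, $L_S(h)=\frac{1}{|S|}\sum_{(x,y)\in S}1[h(x)\ne y]$. *)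

theory Defs
  imports Complex_Main
begin

definition emp_loss :: "(nat \<times> int) list \<Rightarrow> (nat \<Rightarrow> int) \<Rightarrow> real" where
  "emp_loss S h = (\<Sum>(x,y)\<leftarrow>S. if h x \<noteq> y then 1 else 0) / real (length S)"

definition singleton_hyp :: "nat \<Rightarrow> nat \<Rightarrow> int" where
  "singleton_hyp i x = (if x = i then 1 else -1)"

end

theory Submission
  imports Defs
begin

definition lab :: "nat set \<Rightarrow> nat \<Rightarrow> int" where
  "lab A i = (if i \<in> A then 1 else -1)"

definition F :: "nat \<Rightarrow> nat set \<Rightarrow> (nat \<times> int) list" where
  "F n A = map (\<lambda>i. (i, lab A i)) [1..<n+1]"

definition err :: "(nat \<Rightarrow> int) \<Rightarrow> nat set \<Rightarrow> nat \<Rightarrow> real" where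
  "err f A i = (if f i \<noteq> lab A i then 1 else 0)"

lemma loss_eq:
  "emp_loss (F n x @ F n y) f = (\<Sum>i\<in>{1..n}. err f x i + err f y i) / real (2*n)"
proof -
  have a: "(\<Sum>(p,q)\<leftarrow>F n A. if f p \<noteq> q then 1 else (0::real)) = (\<Sum>i\<in>{1..n}. err f A i)" for A
    unfolding F_def err_def
  proof -
    have "(\<Sum>(p,q)\<leftarrow>map (\<lambda>i. (i, lab A i)) [1..<n+1]. if f p \<noteq> q then 1 else (0::real))
       = (\<Sum>i\<leftarrow>[1..<n+1]. if f i \<noteq> lab A i then 1 else 0)"
      by (simp add: o_def case_prod_beta)
    also have "\<dots> = (\<Sum>i\<in>{1..<n+1}. if f i \<noteq> lab A i then 1 else 0)"
      by (simp only: sum_list_distinct_conv_sum_set[OF distinct_upt] set_upt)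
    also have "\<dots> = (\<Sum>i\<in>{1..n}. if f i \<noteq> lab A i then 1 else 0)"
      by (rule sum.cong) auto
    finally show "(\<Sum>(p,q)\<leftarrow>map (\<lambda>i. (i, lab A i)) [1..<n+1]. if f p \<noteq> q then 1 else (0::real)) = (\<Sum>i\<in>{1..n}. if f i \<noteq> lab A i then 1 else 0)" .
  qed
  show ?thesis
  proof -
    have l: "length (F n x @ F n y) = 2*n" by (simp add: F_def)
    show ?thesis
      by (simp only: emp_loss_def l map_append sum_list_append a sum.distrib)
  qed
qed

lemma card_sum: "(A::nat set) \<subseteq> {1..n} \<Longrightarrow> real (card A) = (\<Sum>j\<in>{1..n}. if j \<in> A then 1 else 0)"
proof -
  assume "A \<subseteq> {1..n}"
  hence "{1..n} \<inter> A = A" by blast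
  moreover have "(\<Sum>j\<in>{1..n}. if j \<in> A then 1 else 0) = real (card ({1..n} \<inter> A))"
  proof -
    have "(\<Sum>j\<in>{1..n}. if j \<in> A then 1 else 0) = (\<Sum>j\<in>{1..n} \<inter> A. (1::real))"
      using sum.inter_restrict[OF finite_atLeastAtMost, of "\<lambda>_. (1::real)" "1::nat" n A] by simp
    thus ?thesis by simp
  qed
  ultimately show ?thesis by simp
qed

theorem lemma3:
  fixes n :: nat
  shows "\<exists>Fa Fb :: nat set \<Rightarrow> (nat \<times> int) list.
    (\<forall>x. x \<subseteq> {1..n} \<longrightarrow>
        length (Fa x) = n \<and> set (Fa x) \<subseteq> {1..n} \<times> {-1, 1} \<and>
        length (Fb x) = n \<and> set (Fb x) \<subseteq> {1..n} \<times> {-1, 1}) \<and>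
    (\<forall>x y. x \<subseteq> {1..n} \<longrightarrow> y \<subseteq> {1..n} \<longrightarrow>
       (x \<inter> y = {} \<longrightarrow>
          (\<forall>f :: nat \<Rightarrow> int. f ` {1..n} \<subseteq> {-1, 1} \<longrightarrow>
             emp_loss (Fa x @ Fb y) f \<ge> real (card x + card y) / real (2 * n))) \<and>
       (x \<inter> y \<noteq> {} \<longrightarrow>
          (\<exists>i. emp_loss (Fa x @ Fb y) (singleton_hyp i)
                 \<le> (real (card x + card y) - 2) / real (2 * n))))"
proof (intro exI[of _ "F n"] conjI allI impI)
  fix x assume "x \<subseteq> {1..n}"
  show "length (F n x) = n" "length (F n x) = n" by (simp_all add: F_def)
  show "set (F n x) \<subseteq> {1..n} \<times> {-1, 1}" "set (F n x) \<subseteq> {1..n} \<times> {-1, 1}"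
    by (auto simp: F_def lab_def split: if_splits)
next
  fix x y and f :: "nat \<Rightarrow> int" assume x: "x \<subseteq> {1..n}" and y: "y \<subseteq> {1..n}" and d: "x \<inter> y = {}"
    and f: "f ` {1..n} \<subseteq> {-1, 1}"
  have "real (card x + card y) = (\<Sum>j\<in>{1..n}. (if j \<in> x then 1 else 0) + (if j \<in> y then 1 else 0))"
    using card_sum[OF x] card_sum[OF y] by (simp add: sum.distrib)
  also have "\<dots> \<le> (\<Sum>i\<in>{1..n}. err f x i + err f y i)"
  proof (rule sum_mono)
    fix j assume j: "j \<in> {1..n}"
    hence "f j = -1 \<or> f j = 1" using f by blast
    thus "(if j \<in> x then 1 else 0) + (if j \<in> y then 1 else 0) \<le> err f x j + err f y j"
      using d by (auto simp: err_def lab_def)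
  qed
  finally show "emp_loss (F n x @ F n y) f \<ge> real (card x + card y) / real (2 * n)"
    unfolding loss_eq by (simp add: divide_right_mono)
next
  fix x y assume x: "x \<subseteq> {1..n}" and y: "y \<subseteq> {1..n}" and d: "x \<inter> y \<noteq> {}"
  then obtain i where i: "i \<in> x" "i \<in> y" by blast
  hence iin: "i \<in> {1..n}" using x by auto
  have e: "err (singleton_hyp i) A j = (if j \<in> A then 1 else 0) - (if j = i then 1 else 0)"
    if "i \<in> A" for A j using that by (auto simp: err_def lab_def singleton_hyp_def)
  have s1: "(\<Sum>j\<in>{1..n}. if j = i then (1::real) else 0) = 1"
    using iin by (simp add: sum.delta)
  have "(\<Sum>j\<in>{1..n}. err (singleton_hyp i) x j + err (singleton_hyp i) y j)
      = real (card x + card y) - 2"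
  proof -
    have ex: "(\<Sum>j\<in>{1..n}. err (singleton_hyp i) x j) = real (card x) - 1"
      by (simp only: e[OF i(1)] sum_subtractf card_sum[OF x, symmetric] s1)
    have ey: "(\<Sum>j\<in>{1..n}. err (singleton_hyp i) y j) = real (card y) - 1"
      by (simp only: e[OF i(2)] sum_subtractf card_sum[OF y, symmetric] s1)
    show ?thesis by (simp only: sum.distrib ex ey)
  qed
  then show "\<exists>i. emp_loss (F n x @ F n y) (singleton_hyp i)
                 \<le> (real (card x + card y) - 2) / real (2 * n)"
    by (intro exI[of _ i]) (simp add: loss_eq)
qed

end
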